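(* Let $s\ge2$ be an integer. For every $C_1>0$ there exists $C_2>0$, and for every $C_2'>0$ there exists $C_1'>0$ (all depending only on $s$ and the given constant), such that for every integer $N\ge1$, every $\varepsilon>0$ and every $f\colon\mathbb{N}_0\to\mathbb{U}$: (i) if $\|f\|_{U^s[N]}\ge1-C_1\varepsilon$ then $\operatorname{Re} E_N(f)\ge 1-C_2\varepsilon$; (ii) if $\operatorname{Re}E_N(f)\ge1-C_2'\varepsilon$ then $\|f\|_{U^s[N]}\ge 1-C_1'\varepsilon$, where $$E_N(f)=\frac{1}{|D_N|}\sum_{\vec e\in D_N}\prod_{\omega\in\{0,1\}^s}\mathcal{C}^{|\omega|}f(e_0+\omega_1e_1+\dots+\omega_se_s),\qquad D_N=\Big\{\vec e=(e_0,\dots,e_s)\in[N]^{s+1}:\sum_{i=0}^se_i<N\Big\}.$$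
   Context: $\mathbb{U}=\{z\in\mathbb{C}:|z|=1\}$, $[N]=\{0,\dots,N-1\}$, $\mathcal{C}$ is complex conjugation, $|\omega|=\sum_i\omega_i$. Let $\Pi(N)$ be the set of $\vec n=(n_0,\dots,n_s)\in\mathbb{Z}^{s+1}$ with $n_0+\omega_1n_1+\dots+\omega_sn_s\in[N]$ for all $\omega\in\{0,1\}^s$; the Gowers norm is $\|f\|_{U^s[N]}\ge0$ with $\|f\|_{U^s[N]}^{2^s}=\frac{1}{|\Pi(N)|}\sum_{\vec n\in\Pi(N)}\prod_{\omega}\mathcal{C}^{|\omega|}f(n_0+\omega_1n_1+\dots+\omega_sn_s)$. *)

theory Defs
  imports "HOL-Analysis.Analysis" "HOL-Library.FuncSet"
begin

text \<open>Cube vertices \<omega> \<in> {0,1}^s are encoded as subsets S of {1..s} (S = {i. \<omega>_i = 1}),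
  so |\<omega>| = card S and n_0 + \<omega>_1 n_1 + ... + \<omega>_s n_s = n 0 + (\<Sum>i\<in>S. n i).\<close>

definition cube_pt :: "(nat \<Rightarrow> int) \<Rightarrow> nat set \<Rightarrow> int" where
  "cube_pt n S = n 0 + (\<Sum>i\<in>S. n i)"

definition conj_pow :: "nat \<Rightarrow> complex \<Rightarrow> complex" where
  "conj_pow k z = (if even k then z else cnj z)"

definition cube_prod :: "nat \<Rightarrow> (nat \<Rightarrow> complex) \<Rightarrow> (nat \<Rightarrow> int) \<Rightarrow> complex" where
  "cube_prod s f n = (\<Prod>S\<in>Pow {1..s}. conj_pow (card S) (f (nat (cube_pt n S))))"

definition Pi_par :: "nat \<Rightarrow> nat \<Rightarrow> (nat \<Rightarrow> int) set" where
  "Pi_par s N = {n \<in> {0..s} \<rightarrow>\<^sub>E (UNIV :: int set).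
                  \<forall>S \<subseteq> {1..s}. cube_pt n S \<in> {0..<int N}}"

definition gowers_norm :: "nat \<Rightarrow> nat \<Rightarrow> (nat \<Rightarrow> complex) \<Rightarrow> real" where
  "gowers_norm s N f =
     root (2 ^ s) (Re ((\<Sum>n\<in>Pi_par s N. cube_prod s f n) / of_nat (card (Pi_par s N))))"

definition D_set :: "nat \<Rightarrow> nat \<Rightarrow> (nat \<Rightarrow> int) set" where
  "D_set s N = {e \<in> {0..s} \<rightarrow>\<^sub>E {0..<int N}. (\<Sum>i\<in>{0..s}. e i) < int N}"

definition E_avg :: "nat \<Rightarrow> nat \<Rightarrow> (nat \<Rightarrow> complex) \<Rightarrow> complex" where
  "E_avg s N f = (\<Sum>e\<in>D_set s N. cube_prod s f e) / of_nat (card (D_set s N))"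

end

theory Submission
  imports Defs
begin

definition flip :: "nat set \<Rightarrow> (nat \<Rightarrow> int) \<Rightarrow> (nat \<Rightarrow> int)" where
  "flip T e = (\<lambda>i. if i = 0 then e 0 + sum e T else if i \<in> T then - e i else e i)"

lemma flip_flip: assumes "0 \<notin> T" shows "flip T (flip T e) = e"
proof -
  have "sum (flip T e) T = - sum e T"
    using assms unfolding flip_def by (auto simp: sum_negf[symmetric] intro!: sum.cong)
  then show ?thesis unfolding flip_def by (intro ext) (auto simp: flip_def)
qed

lemma flip_empty: "flip {} e = e"
  unfolding flip_def by auto

lemma cube_pt_flip:
  assumes "finite S" "finite T" "0 \<notin> S" "0 \<notin> T"
  shows "cube_pt (flip T e) S = cube_pt e ((S - T) \<union> (T - S))"
proof -
  have "sum (flip T e) S = sum (\<lambda>i. if i \<in> T then - e i else e i) S"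
    using assms unfolding flip_def by (intro sum.cong) auto
  also have "\<dots> = - sum e (S \<inter> T) + sum e (S - T)"
    using assms by (simp add: sum.If_cases sum_negf Int_commute Diff_eq)
  finally have 1: "sum (flip T e) S = - sum e (S \<inter> T) + sum e (S - T)" .
  have 2: "sum e T = sum e (S \<inter> T) + sum e (T - S)"
    using assms by (metis Int_commute sum.Int_Diff)
  have 3: "sum e ((S - T) \<union> (T - S)) = sum e (S - T) + sum e (T - S)"
    using assms by (intro sum.union_disjoint) auto
  have "flip T e 0 = e 0 + sum e T" unfolding flip_def by simp
  then show ?thesis unfolding cube_pt_def using 1 2 3 by simp
qed

lemma card_symdiff:
  assumes "finite S" "finite T"
  shows "card ((S - T) \<union> (T - S)) + 2 * card (S \<inter> T) = card S + card T"
proof -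
  have a: "card ((S - T) \<union> (T - S)) = card (S - T) + card (T - S)"
    using assms by (intro card_Un_disjoint) auto
  have b: "card S = card (S - T) + card (S \<inter> T)"
    using assms by (metis add.commute card_Int_Diff)
  have c: "card T = card (T - S) + card (S \<inter> T)"
    using assms by (metis Int_commute add.commute card_Int_Diff)
  show ?thesis using a b c by simp
qed

lemma conj_pow_shift:
  "conj_pow (card ((S - T) \<union> (T - S))) z =
     (if even (card T) then conj_pow (card S) z else cnj (conj_pow (card S) z))"
  if "finite S" "finite T" for S T z
proof -
  have "even (card ((S - T) \<union> (T - S))) = (even (card S) = even (card T))"
    using card_symdiff[OF that] by (metis even_add even_mult_iff even_numeral)
  then show ?thesis unfolding conj_pow_def by auto
qed

lemma Re_cube_prod_flip:
  assumes "T \<subseteq> {1..s}"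
  shows "Re (cube_prod s f (flip T e)) = Re (cube_prod s f e)"
proof -
  let ?h = "\<lambda>U. (U - T) \<union> (T - U)"
  have fT: "finite T" using assms finite_subset by blast
  have symd: "\<And>U. ?h (?h U) = U" by blast
  have bij: "bij_betw ?h (Pow {1..s}) (Pow {1..s})"
  proof (rule bij_betwI[where g = ?h])
    show "?h \<in> Pow {1..s} \<rightarrow> Pow {1..s}" using assms by auto
    show "?h \<in> Pow {1..s} \<rightarrow> Pow {1..s}" using assms by auto
  qed auto
  have "cube_prod s f (flip T e) =
      (\<Prod>S\<in>Pow {1..s}. conj_pow (card S) (f (nat (cube_pt e (?h S)))))"
    unfolding cube_prod_def
    using assms fT by (intro prod.cong refl) (subst cube_pt_flip, auto intro: finite_subset)
  also have "\<dots> = (\<Prod>U\<in>Pow {1..s}. conj_pow (card (?h U)) (f (nat (cube_pt e (?h (?h U))))))"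
    using prod.reindex_bij_betw[OF bij, of "\<lambda>S. conj_pow (card S) (f (nat (cube_pt e (?h S))))"]
    by simp
  also have "\<dots> = (\<Prod>U\<in>Pow {1..s}. conj_pow (card (?h U)) (f (nat (cube_pt e U))))"
    by (simp only: symd)
  also have "\<dots> = (\<Prod>U\<in>Pow {1..s}. (if even (card T) then conj_pow (card U) (f (nat (cube_pt e U)))
                     else cnj (conj_pow (card U) (f (nat (cube_pt e U))))))"
    apply (intro prod.cong refl)
    subgoal for U using conj_pow_shift[of U T] fT finite_subset[of U "{1..s}"] by auto
    done
  also have "\<dots> = (if even (card T) then cube_prod s f e else cnj (cube_prod s f e))"
    unfolding cube_prod_def by (auto simp: cnj_prod)
  finally show ?thesis by simp
qed

lemma norm_cube_prod:
  assumes "\<forall>x. norm (f x) = 1"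
  shows "norm (cube_prod s f e) = 1"
  unfolding cube_prod_def prod_norm[symmetric] conj_pow_def using assms by (intro prod.neutral ballI) simp

lemma sum_0_split: "sum (e :: nat \<Rightarrow> int) {0..s} = e 0 + sum e {1..s}"
  by (simp add: sum.atLeast_Suc_atMost)

lemma D_sub_Pi: "D_set s N \<subseteq> Pi_par s N"
proof
  fix e assume "e \<in> D_set s N"
  then have eE: "e \<in> {0..s} \<rightarrow>\<^sub>E {0..<int N}" and es: "sum e {0..s} < int N"
    unfolding D_set_def by auto
  have nn: "\<And>i. i \<in> {0..s} \<Longrightarrow> e i \<ge> 0" using eE by auto
  have "cube_pt e S \<in> {0..<int N}" if S: "S \<subseteq> {1..s}" for S
  proof -
    have "sum e S \<le> sum e {1..s}" using S nn by (intro sum_mono2) auto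
    moreover have "sum e S \<ge> 0" using S nn by (intro sum_nonneg) auto
    ultimately show ?thesis using es nn[of 0] unfolding cube_pt_def sum_0_split by auto
  qed
  then show "e \<in> Pi_par s N" using eE unfolding Pi_par_def by auto
qed

lemma Pi_sub: "Pi_par s N \<subseteq> (\<lambda>(T,e). flip T e) ` (Pow {1..s} \<times> D_set s N)"
proof
  fix n assume "n \<in> Pi_par s N"
  then have nE: "n \<in> {0..s} \<rightarrow>\<^sub>E UNIV" and nc: "\<And>S. S \<subseteq> {1..s} \<Longrightarrow> cube_pt n S \<in> {0..<int N}"
    unfolding Pi_par_def by auto
  define T where "T = {i\<in>{1..s}. n i < 0}"
  define e where "e = flip T n"
  have T1: "T \<subseteq> {1..s}" and T0: "0 \<notin> T" unfolding T_def by auto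
  have ne: "n = flip T e" unfolding e_def using flip_flip[OF T0] by simp
  have e0: "e 0 = cube_pt n T" unfolding e_def flip_def cube_pt_def by simp
  have ei: "\<And>i. i \<in> {1..s} \<Longrightarrow> e i = \<bar>n i\<bar>" unfolding e_def flip_def T_def by auto
  have "sum e {1..s} = sum (\<lambda>i. \<bar>n i\<bar>) {1..s}" using ei by (intro sum.cong) auto
  also have "\<dots> = sum (\<lambda>i. \<bar>n i\<bar>) T + sum (\<lambda>i. \<bar>n i\<bar>) ({1..s} - T)"
    using T1 by (metis finite_atLeastAtMost sum.subset_diff add.commute)
  also have "sum (\<lambda>i. \<bar>n i\<bar>) T = - sum n T" unfolding T_def by (simp add: sum_negf[symmetric])
  also have "sum (\<lambda>i. \<bar>n i\<bar>) ({1..s} - T) = sum n ({1..s} - T)" unfolding T_def by (intro sum.cong) auto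
  finally have "sum e {0..s} = cube_pt n ({1..s} - T)"
    unfolding sum_0_split e0 cube_pt_def by simp
  then have es: "sum e {0..s} < int N" using nc[of "{1..s} - T"] by auto
  have enn: "\<And>i. i \<in> {0..s} \<Longrightarrow> e i \<ge> 0"
  proof -
    fix i assume "i \<in> {0..s}"
    then show "e i \<ge> 0" using e0 nc[OF T1] ei[of i] by (cases "i = 0") auto
  qed
  have "e i < int N" if "i \<in> {0..s}" for i
  proof -
    have "e i \<le> sum e {0..s}" using that enn by (intro member_le_sum) auto
    then show ?thesis using es by simp
  qed
  moreover have "e i = undefined" if "i \<notin> {0..s}" for i
    using that nE unfolding e_def flip_def T_def by (auto simp: PiE_def extensional_def)
  ultimately have "e \<in> D_set s N" using enn es unfolding D_set_def by (auto simp: PiE_def extensional_def)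
  then show "n \<in> (\<lambda>(T,e). flip T e) ` (Pow {1..s} \<times> D_set s N)" using ne T1 by force
qed

lemma finite_D: "finite (D_set s N)"
  unfolding D_set_def by (rule finite_subset[of _ "{0..s} \<rightarrow>\<^sub>E {0..<int N}"]) (auto intro: finite_PiE)

lemma finite_Pi: "finite (Pi_par s N)"
  by (rule finite_subset[OF Pi_sub]) (auto intro: finite_D)

lemma sum_Pi_le:
  fixes h :: "(nat \<Rightarrow> int) \<Rightarrow> real"
  assumes inv: "\<And>T e. T \<subseteq> {1..s} \<Longrightarrow> h (flip T e) = h e" and nn: "\<And>e. h e \<ge> 0"
  shows "sum h (Pi_par s N) \<le> 2 ^ s * sum h (D_set s N)"
proof -
  let ?F = "(\<lambda>(T,e). flip T e)"
  have "sum h (Pi_par s N) \<le> sum h (?F ` (Pow {1..s} \<times> D_set s N))"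
    using Pi_sub finite_D nn by (intro sum_mono2) auto
  also have "\<dots> \<le> sum (h \<circ> ?F) (Pow {1..s} \<times> D_set s N)"
    using finite_D nn by (intro sum_image_le) auto
  also have "\<dots> = (\<Sum>T\<in>Pow {1..s}. \<Sum>e\<in>D_set s N. h (flip T e))"
    by (subst sum.cartesian_product) (simp add: case_prod_beta)
  also have "\<dots> = (\<Sum>T\<in>Pow {1..s}. sum h (D_set s N))"
    using inv by (intro sum.cong refl) auto
  also have "\<dots> = 2 ^ s * sum h (D_set s N)" by (simp add: card_Pow)
  finally show ?thesis .
qed

lemma key_bounds:
  fixes s N :: nat and f :: "nat \<Rightarrow> complex"
  assumes N: "N \<ge> 1" and f: "\<forall>x. norm (f x) = 1"
  defines "p \<equiv> Re ((\<Sum>n\<in>Pi_par s N. cube_prod s f n) / of_nat (card (Pi_par s N)))"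
  defines "q \<equiv> Re (E_avg s N f)"
  shows "1 - p \<le> 2 ^ s * (1 - q)" "1 - q \<le> 2 ^ s * (1 - p)" "-1 \<le> q" "-1 \<le> p" "p \<le> 1"
proof -
  define g where "g e = 1 - Re (cube_prod s f e)" for e
  have g0: "g e \<ge> 0" and g2: "g e \<le> 2" for e
    using abs_Re_le_cmod[of "cube_prod s f e"] norm_cube_prod[OF f, of s e] unfolding g_def by auto
  let ?P = "Pi_par s N" and ?D = "D_set s N"
  define SP where "SP = sum g ?P"
  define SD where "SD = sum g ?D"
  define cP where "cP = real (card ?P)"
  define cD where "cD = real (card ?D)"
  have "(\<lambda>i. if i \<in> {0..s} then 0 else undefined) \<in> ?D"
    using N unfolding D_set_def by (auto simp: PiE_def extensional_def)
  then have "card ?D > 0" using finite_D card_gt_0_iff by blast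
  then have cD0: "cD > 0" unfolding cD_def by simp
  have cDP: "cD \<le> cP" unfolding cD_def cP_def using D_sub_Pi finite_Pi by (simp add: card_mono)
  have cPD: "cP \<le> 2 ^ s * cD"
    using sum_Pi_le[of s "\<lambda>_. 1" N] unfolding cP_def cD_def by simp
  have ginv: "\<And>T e. T \<subseteq> {1..s} \<Longrightarrow> g (flip T e) = g e" unfolding g_def using Re_cube_prod_flip by simp
  have SPD: "SP \<le> 2 ^ s * SD" unfolding SP_def SD_def by (rule sum_Pi_le) (auto simp: ginv g0)
  have SDP: "SD \<le> SP" unfolding SP_def SD_def using D_sub_Pi finite_Pi g0 by (intro sum_mono2) auto
  have SD0: "SD \<ge> 0" unfolding SD_def using g0 by (simp add: sum_nonneg)
  have SP0: "SP \<ge> 0" unfolding SP_def using g0 by (simp add: sum_nonneg)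
  have SP2: "SP \<le> 2 * cP" unfolding SP_def cP_def using sum_bounded_above[of ?P g 2] g2 by auto
  have SD2: "SD \<le> 2 * cD" unfolding SD_def cD_def using sum_bounded_above[of ?D g 2] g2 by auto
  have cP0: "cP > 0" using cD0 cDP by simp
  have pe: "p = 1 - SP / cP"
  proof -
    have "SP = cP - (\<Sum>n\<in>?P. Re (cube_prod s f n))" unfolding SP_def g_def cP_def
      by (simp add: sum_subtractf)
    moreover have "p = (\<Sum>n\<in>?P. Re (cube_prod s f n)) / cP"
      unfolding p_def cP_def by (simp add: Re_sum Re_divide_of_nat)
    ultimately show ?thesis using cP0 by (simp add: diff_divide_distrib)
  qed
  have qe: "q = 1 - SD / cD"
  proof -
    have "SD = cD - (\<Sum>n\<in>?D. Re (cube_prod s f n))" unfolding SD_def g_def cD_def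
      by (simp add: sum_subtractf)
    moreover have "q = (\<Sum>n\<in>?D. Re (cube_prod s f n)) / cD"
      unfolding q_def E_avg_def cD_def by (simp add: Re_sum Re_divide_of_nat)
    ultimately show ?thesis using cD0 by (simp add: diff_divide_distrib)
  qed
  have "SP / cP \<le> 2 ^ s * SD / cP" using SPD cP0 by (simp add: divide_right_mono)
  also have "\<dots> \<le> 2 ^ s * SD / cD" using cD0 cDP SP0 SDP SD0
    by (intro divide_left_mono) (auto intro: mult_nonneg_nonneg order_trans)
  finally show "1 - p \<le> 2 ^ s * (1 - q)" unfolding pe qe by simp
  have "SD / cD \<le> SP / cD" using SDP cD0 by (simp add: divide_right_mono)
  also have "\<dots> \<le> 2 ^ s * (SP / cP)"
  proof -
    have "SP * cP \<le> SP * (2 ^ s * cD)" using SP0 cPD by (simp add: mult_left_mono)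
    then show ?thesis using cD0 cP0 by (simp add: field_simps)
  qed
  finally show "1 - q \<le> 2 ^ s * (1 - p)" unfolding pe qe by simp
  show "-1 \<le> q" unfolding qe using SD2 cD0 by (simp add: field_simps)
  show "-1 \<le> p" unfolding pe using SP2 cP0 by (simp add: field_simps)
  show "p \<le> 1" unfolding pe using SP0 cP0 by simp
qed


lemma arith_i:
  fixes p q C1 \<epsilon> :: real and s :: nat
  assumes "C1 > 0" "\<epsilon> > 0" "1 - q \<le> 2 ^ s * (1 - p)" "-1 \<le> q"
    and G: "root (2 ^ s) p \<ge> 1 - C1 * \<epsilon>"
  shows "q \<ge> 1 - (2 * 4 ^ s * C1) * \<epsilon>"
proof (cases "C1 * \<epsilon> \<ge> 1")
  case True
  have "(1::real) \<le> 4 ^ s" by simp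
  then have "2 * C1 * \<epsilon> \<le> 2 * 4 ^ s * C1 * \<epsilon>" using assms by (simp add: mult_right_mono)
  then show ?thesis using True assms(4) by linarith
next
  case False
  let ?k = "2 ^ s :: nat"
  have k0: "?k > 0" by simp
  have x0: "1 - C1 * \<epsilon> > 0" using False by simp
  have rp: "root ?k p > 0" using G x0 by linarith
  then have p0: "p > 0" using k0 by simp
  have "p = root ?k p ^ ?k" using real_root_pow_pos2[OF k0, of p] p0 by simp
  also have "\<dots> \<ge> (1 - C1 * \<epsilon>) ^ ?k" using G x0 by (intro power_mono) auto
  finally have "p \<ge> (1 + (- C1 * \<epsilon>)) ^ ?k" by simp
  moreover have "(1 + (- C1 * \<epsilon>)) ^ ?k \<ge> 1 + real ?k * (- C1 * \<epsilon>)"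
    using Bernoulli_inequality[of "- C1 * \<epsilon>" ?k] x0 by simp
  ultimately have "1 - p \<le> 2 ^ s * (C1 * \<epsilon>)" by simp
  then have "1 - q \<le> 2 ^ s * (2 ^ s * (C1 * \<epsilon>))" using assms(3)
    by (smt (verit) mult_le_cancel_left_pos zero_less_power)
  moreover have "(2::real) ^ s * (2 ^ s * (C1 * \<epsilon>)) = 4 ^ s * (C1 * \<epsilon>)"
    by (simp add: mult.assoc[symmetric] power_mult_distrib[symmetric])
  ultimately have h: "1 - q \<le> 4 ^ s * (C1 * \<epsilon>)" by simp
  have "0 \<le> 4 ^ s * (C1 * \<epsilon>)" using assms by simp
  then have "1 - 2 * (4 ^ s * (C1 * \<epsilon>)) \<le> q" using h by linarith
  then show ?thesis by (simp add: mult.assoc)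
qed

lemma arith_ii:
  fixes p q C2 \<epsilon> :: real and s :: nat
  assumes "C2 > 0" "\<epsilon> > 0" "1 - p \<le> 2 ^ s * (1 - q)" "-1 \<le> p" "p \<le> 1"
    and Q: "q \<ge> 1 - C2 * \<epsilon>"
  shows "root (2 ^ s) p \<ge> 1 - (2 * 2 ^ s * C2) * \<epsilon>"
proof -
  let ?k = "2 ^ s :: nat"
  have k0: "?k > 0" by simp
  have "2 ^ s * (1 - q) \<le> 2 ^ s * (C2 * \<epsilon>)" using Q by simp
  then have "1 - p \<le> 2 ^ s * (C2 * \<epsilon>)" using assms(3) by linarith
  then have pp: "1 - p \<le> 2 ^ s * C2 * \<epsilon>" by (simp add: mult.assoc)
  have pos: "0 \<le> 2 ^ s * C2 * \<epsilon>" using assms by simp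
  show ?thesis
  proof (cases "p \<ge> 0")
    case True
    have r0: "root ?k p \<ge> 0" using True by simp
    have r1: "root ?k p \<le> 1" using real_root_le_mono[OF k0 assms(5)] by simp
    have "p = root ?k p ^ ?k" using real_root_pow_pos2[OF k0 True] by simp
    also have "\<dots> \<le> root ?k p ^ 1" using r0 r1 by (intro power_decreasing) auto
    finally have "root ?k p \<ge> p" by simp
    then show ?thesis using pp pos by simp
  next
    case False
    have "root ?k p \<ge> root ?k (-1)" using real_root_le_mono[OF k0 assms(4)] by simp
    then have "root ?k p \<ge> -1" by (simp add: real_root_minus)
    then show ?thesis using pp False by simp
  qed
qed

theorem lemma3p2:
  fixes s :: nat
  assumes "s \<ge> 2"
  shows "(\<forall>C1>0. \<exists>C2>(0::real). \<forall>N::nat. \<forall>\<epsilon>>(0::real). \<forall>f :: nat \<Rightarrow> complex.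
            N \<ge> 1 \<longrightarrow> (\<forall>x. norm (f x) = 1) \<longrightarrow>
            gowers_norm s N f \<ge> 1 - C1 * \<epsilon> \<longrightarrow> Re (E_avg s N f) \<ge> 1 - C2 * \<epsilon>)
       \<and> (\<forall>C2'>0. \<exists>C1'>(0::real). \<forall>N::nat. \<forall>\<epsilon>>(0::real). \<forall>f :: nat \<Rightarrow> complex.
            N \<ge> 1 \<longrightarrow> (\<forall>x. norm (f x) = 1) \<longrightarrow>
            Re (E_avg s N f) \<ge> 1 - C2' * \<epsilon> \<longrightarrow> gowers_norm s N f \<ge> 1 - C1' * \<epsilon>)"
proof (intro conjI allI impI)
  fix C1 :: real assume C1: "C1 > 0"
  show "\<exists>C2>0. \<forall>N::nat. \<forall>\<epsilon>>(0::real). \<forall>f :: nat \<Rightarrow> complex.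
            N \<ge> 1 \<longrightarrow> (\<forall>x. norm (f x) = 1) \<longrightarrow>
            gowers_norm s N f \<ge> 1 - C1 * \<epsilon> \<longrightarrow> Re (E_avg s N f) \<ge> 1 - C2 * \<epsilon>"
  proof (intro exI[of _ "2 * 4 ^ s * C1"] conjI allI impI)
    show "0 < 2 * 4 ^ s * C1" using C1 by simp
    fix N :: nat and \<epsilon> :: real and f :: "nat \<Rightarrow> complex"
    assume "\<epsilon> > 0" "N \<ge> 1" "\<forall>x. norm (f x) = 1" "gowers_norm s N f \<ge> 1 - C1 * \<epsilon>"
    then show "Re (E_avg s N f) \<ge> 1 - 2 * 4 ^ s * C1 * \<epsilon>"
      using arith_i[OF C1 _ key_bounds(2) key_bounds(3)] unfolding gowers_norm_def by blast
  qed
next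
  fix C2 :: real assume C2: "C2 > 0"
  show "\<exists>C1'>0. \<forall>N::nat. \<forall>\<epsilon>>(0::real). \<forall>f :: nat \<Rightarrow> complex.
            N \<ge> 1 \<longrightarrow> (\<forall>x. norm (f x) = 1) \<longrightarrow>
            Re (E_avg s N f) \<ge> 1 - C2 * \<epsilon> \<longrightarrow> gowers_norm s N f \<ge> 1 - C1' * \<epsilon>"
  proof (intro exI[of _ "2 * 2 ^ s * C2"] conjI allI impI)
    show "0 < 2 * 2 ^ s * C2" using C2 by simp
    fix N :: nat and \<epsilon> :: real and f :: "nat \<Rightarrow> complex"
    assume "\<epsilon> > 0" "N \<ge> 1" "\<forall>x. norm (f x) = 1" "Re (E_avg s N f) \<ge> 1 - C2 * \<epsilon>"
    then show "gowers_norm s N f \<ge> 1 - 2 * 2 ^ s * C2 * \<epsilon>"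
      using arith_ii[OF C2 _ key_bounds(1) key_bounds(4) key_bounds(5)] unfolding gowers_norm_def by blast
  qed
qed

end
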